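(* Under the setup in the context, assume $V_M^TV_A=I$. Let $\psi^{(k)}_j$ be defined by $\psi^{(0)}_j=0$ and $\psi_j^{(k)} = \psi_j^{(k-1)} + \frac{\sigma_{A,j}^2}{\sigma^2_{M,j}+\alpha^2}\big(1-\frac{\sigma_{A,j}^2}{\sigma^2_{M,j}+\alpha^2}\big)^{k-1}$ for $k\ge1$. Define $\phi^{(0)}_j=0$ and, for $k\ge1$, $$\phi_{j}^{(k)} = \phi_{j}^{(k-1)} + \left(\sigma_{M,j}^2+\alpha^2\right)^{-1}\Big[\left(\sigma_{M,j}^2+\alpha^2\right)\big(\psi_j^{(k)}-\psi_j^{(k-1)}\big) + \Delta^{(k)}_j -\alpha^2\phi^{(k-1)}_{j}\Big],$$ where $$\Delta^{(k)}_j = \frac{\alpha^2\sigma_{A,j}^2}{\sigma_{M,j}^2+\alpha^2}\sum_{i=0}^{k-2}\left(1-\frac{\sigma_{A,j}^2}{\sigma_{M,j}^2+\alpha^2}\right)^i\phi_{j}^{(k-2-i)}$$ (empty sum $=0$). Then for every $k\ge0$, $$x^{(k)}_{IR} = \sum_{j=1}^n \phi_j^{(k)}\frac{u^T_{A,j}b}{\sigma_{A,j}}v_{M,j}.$$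
   Context: Let $m\ge n$ and $A\in\mathbb{R}^{m\times n}$ with singular value decomposition $A=U_A\Sigma_AV_A^T$, where $U_A\in\mathbb{R}^{m\times m}$, $V_A\in\mathbb{R}^{n\times n}$ are orthogonal with columns $u_{A,j}$, $v_{A,j}$, and $\Sigma_A\in\mathbb{R}^{m\times n}$ is diagonal with diagonal entries $\sigma_{A,1}\ge\dots\ge\sigma_{A,n}>0$. Let $b\in\mathbb{R}^m$ and $\alpha>0$. Let $V_M\in\mathbb{R}^{n\times n}$ be orthogonal with columns $v_{M,j}$, let $\sigma_{M,1},\dots,\sigma_{M,n}\ge 0$ be given reals, let $D_M=\mathrm{diag}(d_{M,1},\dots,d_{M,n})$ with $d_{M,j}=(\sigma_{M,j}^2+\alpha^2)^{1/2}$, and let $M=D_MV_M^T$. The iterative refinement iterates for the Tikhonov problem are $x^{(0)}_{IR}=0$ and $x^{(k)}_{IR} = x^{(k-1)}_{IR} + (M^TM)^{-1}A^T(b-Ax^{(k-1)}_{IR}) - \alpha^2 (M^TM)^{-1}x^{(k-1)}_{IR}$ for $k\ge1$. (The paper intends the bracketed quantity to be computed in a high precision and the preconditioner in a low precision; the statement here is the exact-arithmetic identity.) *)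

theory Defs
  imports Complex_Main "Jordan_Normal_Form.Matrix"
begin

definition orth_mat :: "nat \<Rightarrow> real mat \<Rightarrow> bool" where
  "orth_mat n Q \<longleftrightarrow> Q \<in> carrier_mat n n \<and> transpose_mat Q * Q = 1\<^sub>m n \<and> Q * transpose_mat Q = 1\<^sub>m n"

definition inv_mat :: "nat \<Rightarrow> real mat \<Rightarrow> real mat" where
  "inv_mat n X = (THE B. B \<in> carrier_mat n n \<and> X * B = 1\<^sub>m n \<and> B * X = 1\<^sub>m n)"

fun x_IR :: "real mat \<Rightarrow> real mat \<Rightarrow> real \<Rightarrow> real vec \<Rightarrow> nat \<Rightarrow> real vec" where
  "x_IR A M \<alpha> b 0 = 0\<^sub>v (dim_col A)"
| "x_IR A M \<alpha> b (Suc k) =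
     (let x = x_IR A M \<alpha> b k; P = inv_mat (dim_col A) (transpose_mat M * M) in
      x + P *\<^sub>v (transpose_mat A *\<^sub>v (b - A *\<^sub>v x)) - (\<alpha>\<^sup>2) \<cdot>\<^sub>v (P *\<^sub>v x))"

(* psi_j^(k) with sA = sigma_{A,j}, sM = sigma_{M,j} *)
fun psi :: "real \<Rightarrow> real \<Rightarrow> real \<Rightarrow> nat \<Rightarrow> real" where
  "psi sA sM \<alpha> 0 = 0"
| "psi sA sM \<alpha> (Suc k) = psi sA sM \<alpha> k
     + sA\<^sup>2 / (sM\<^sup>2 + \<alpha>\<^sup>2) * (1 - sA\<^sup>2 / (sM\<^sup>2 + \<alpha>\<^sup>2)) ^ k"

(* phi_j^(k); the Delta term at step k = Suc k' sums i = 0 .. k-2 = k'-1, i.e. i < k' *)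
function phi :: "real \<Rightarrow> real \<Rightarrow> real \<Rightarrow> nat \<Rightarrow> real" where
  "phi sA sM \<alpha> 0 = 0"
| "phi sA sM \<alpha> (Suc k) =
     (let d2 = sM\<^sup>2 + \<alpha>\<^sup>2; r = sA\<^sup>2 / d2;
          \<Delta> = \<alpha>\<^sup>2 * sA\<^sup>2 / d2 * (\<Sum>i<k. (1 - r) ^ i * phi sA sM \<alpha> (k - 1 - i))
      in phi sA sM \<alpha> k + inverse d2 *
           (d2 * (psi sA sM \<alpha> (Suc k) - psi sA sM \<alpha> k) + \<Delta> - \<alpha>\<^sup>2 * phi sA sM \<alpha> k))"
  by pat_completeness auto
termination
  by (relation "measure (\<lambda>(_,_,_,k). k)") auto

end

theory Submission imports Defs begin

lemma gen1: "(d::real) \<noteq> 0 \<Longrightarrow> inverse d * (d*X + Y - Z) = X + Y/d - Z/d"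
  by (simp add: field_simps)
lemma gen2: "1 - (p::real) = q + a*s \<Longrightarrow> P' = p + r*q + a*r*s - a*p \<Longrightarrow> 1 - P' = (1-r)*q + a*(p + (1-r)*s)"
  by (simp add: algebra_simps)
lemma gen3: "(d::real) \<noteq> 0 \<Longrightarrow> p + x/d*(1-p) - y/d * p = p + (x - x*p - y*p)/d"
  by (simp add: field_simps)

lemma phi_expand:
  fixes sA sM \<alpha> :: real and k :: nat
  assumes "\<alpha> > 0"
  shows "phi sA sM \<alpha> (Suc k) = phi sA sM \<alpha> k + (sA\<^sup>2 / (sM\<^sup>2 + \<alpha>\<^sup>2))*(1-sA\<^sup>2 / (sM\<^sup>2 + \<alpha>\<^sup>2))^k
     + (\<alpha>\<^sup>2 / (sM\<^sup>2 + \<alpha>\<^sup>2))*(sA\<^sup>2 / (sM\<^sup>2 + \<alpha>\<^sup>2))*(\<Sum>i<k. (1 - sA\<^sup>2 / (sM\<^sup>2 + \<alpha>\<^sup>2)) ^ i * phi sA sM \<alpha> (k - 1 - i))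
     - (\<alpha>\<^sup>2 / (sM\<^sup>2 + \<alpha>\<^sup>2)) * phi sA sM \<alpha> k"
proof -
  define d2 where "d2 = sM\<^sup>2 + \<alpha>\<^sup>2"
  have d: "d2 > 0" unfolding d2_def using assms(1) by (simp add: add_nonneg_pos)
  define r where "r = sA\<^sup>2 / d2"
  define S where "S = (\<Sum>i<k. (1 - r) ^ i * phi sA sM \<alpha> (k - 1 - i))"
  have ps: "psi sA sM \<alpha> (Suc k) - psi sA sM \<alpha> k = r * (1-r)^k"
    by (simp add: r_def d2_def)
  have "phi sA sM \<alpha> (Suc k) = phi sA sM \<alpha> k + inverse d2 *
           (d2 * (psi sA sM \<alpha> (Suc k) - psi sA sM \<alpha> k) + \<alpha>\<^sup>2 * sA\<^sup>2 / d2 * S - \<alpha>\<^sup>2 * phi sA sM \<alpha> k)"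
    by (simp add: Let_def d2_def[symmetric] r_def[symmetric] S_def)
  also have "\<dots> = phi sA sM \<alpha> k + r*(1-r)^k + (\<alpha>\<^sup>2/d2)*r*S - (\<alpha>\<^sup>2/d2) * phi sA sM \<alpha> k"
    unfolding ps gen1[OF d[THEN less_imp_neq, symmetric]]
    by (simp add: r_def)
  finally show ?thesis unfolding r_def S_def d2_def .
qed

lemma phi_err:
  fixes sA sM \<alpha> :: real and k :: nat
  assumes "\<alpha> > 0"
  shows "1 - phi sA sM \<alpha> k = (1-sA\<^sup>2 / (sM\<^sup>2 + \<alpha>\<^sup>2))^k + (\<alpha>\<^sup>2 / (sM\<^sup>2 + \<alpha>\<^sup>2))*(\<Sum>i<k. (1 - sA\<^sup>2 / (sM\<^sup>2 + \<alpha>\<^sup>2)) ^ i * phi sA sM \<alpha> (k - 1 - i))"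
proof (induction k)
  case 0
  then show ?case by simp
next
  case (Suc k)
  define r where "r = sA\<^sup>2 / (sM\<^sup>2 + \<alpha>\<^sup>2)"
  define a where "a = \<alpha>\<^sup>2 / (sM\<^sup>2 + \<alpha>\<^sup>2)"
  define f where "f = (\<lambda>i. (1 - r) ^ i * phi sA sM \<alpha> (Suc k - 1 - i))"
  have "(\<Sum>i<Suc k. f i) = f 0 + (\<Sum>i<k. f (Suc i))"
    by (rule sum.lessThan_Suc_shift)
  also have "\<dots> = phi sA sM \<alpha> k + (1-r) * (\<Sum>i<k. (1 - r) ^ i * phi sA sM \<alpha> (k - 1 - i))"
    by (simp add: f_def sum_distrib_left mult.assoc)
  finally have S: "(\<Sum>i<Suc k. (1 - r) ^ i * phi sA sM \<alpha> (Suc k - 1 - i))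
     = phi sA sM \<alpha> k + (1-r) * (\<Sum>i<k. (1 - r) ^ i * phi sA sM \<alpha> (k - 1 - i))"
    unfolding f_def .
  show ?case
    unfolding r_def[symmetric] a_def[symmetric] S power_Suc
    using gen2[OF Suc[unfolded r_def[symmetric] a_def[symmetric]] phi_expand[OF assms, of sA sM k, unfolded r_def[symmetric] a_def[symmetric]]]
    by simp
qed

lemma phi_rec:
  fixes sA sM \<alpha> :: real and k :: nat
  assumes "\<alpha> > 0"
  shows "phi sA sM \<alpha> (Suc k) = phi sA sM \<alpha> k
    + (sA\<^sup>2 - sA\<^sup>2 * phi sA sM \<alpha> k - \<alpha>\<^sup>2 * phi sA sM \<alpha> k) / (sM\<^sup>2 + \<alpha>\<^sup>2)"
proof -
  have d: "sM\<^sup>2 + \<alpha>\<^sup>2 > 0" using assms by (simp add: add_nonneg_pos)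
  define r where "r = sA\<^sup>2 / (sM\<^sup>2 + \<alpha>\<^sup>2)"
  define a where "a = \<alpha>\<^sup>2 / (sM\<^sup>2 + \<alpha>\<^sup>2)"
  define S where "S = (\<Sum>i<k. (1 - r) ^ i * phi sA sM \<alpha> (k - 1 - i))"
  have e: "1 - phi sA sM \<alpha> k = (1-r)^k + a*S" using phi_err[OF assms, of sA sM k]
    unfolding r_def a_def S_def by simp
  have x: "phi sA sM \<alpha> (Suc k) = phi sA sM \<alpha> k + r*(1-r)^k + a*r*S - a * phi sA sM \<alpha> k"
    using phi_expand[OF assms, of sA sM k] unfolding r_def a_def S_def by simp
  have "r*(1-r)^k + a*r*S = r * (1 - phi sA sM \<alpha> k)" using arg_cong[OF e, of "(*) r"] by (simp add: algebra_simps)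
  hence "phi sA sM \<alpha> (Suc k) = phi sA sM \<alpha> k + r * (1 - phi sA sM \<alpha> k) - a * phi sA sM \<alpha> k"
    using x by simp
  thus ?thesis unfolding r_def a_def using gen3[OF d[THEN less_imp_neq, symmetric]] by simp
qed

definition dg :: "nat \<Rightarrow> (nat \<Rightarrow> real) \<Rightarrow> real mat" where
  "dg n f = mat n n (\<lambda>(i,j). if i = j then f j else 0)"

lemma dg_carrier[simp]: "dg n f \<in> carrier_mat n n" by (simp add: dg_def)
lemma dg_index[simp]: "i < n \<Longrightarrow> j < n \<Longrightarrow> dg n f $$ (i,j) = (if i = j then f j else 0)"
  by (simp add: dg_def)
lemma dg_dims[simp]: "dim_row (dg n f) = n" "dim_col (dg n f) = n" by (simp_all add: dg_def)

lemma diag_mult_vec: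
  assumes X: "X \<in> carrier_mat p q"
    and d: "\<And>i j. i < p \<Longrightarrow> j < q \<Longrightarrow> X $$ (i,j) = (if i = j then f j else 0)"
    and v: "v \<in> carrier_vec q"
  shows "X *\<^sub>v v = vec p (\<lambda>i. if i < q then f i * v $ i else 0)"
proof (rule eq_vecI)
  show "dim_vec (X *\<^sub>v v) = dim_vec (vec p (\<lambda>i. if i < q then f i * v $ i else 0))" using X by simp
  fix i assume "i < dim_vec (vec p (\<lambda>i. if i < q then f i * v $ i else 0))"
  hence i: "i < p" by simp
  have "(X *\<^sub>v v) $ i = (\<Sum>j\<in>{0..<q}. X $$ (i,j) * v $ j)"
    using X v i by (simp add: scalar_prod_def)
  also have "\<dots> = (\<Sum>j\<in>{0..<q}. if i = j then f j * v $ j else 0)"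
    by (rule sum.cong) (use d i in auto)
  also have "\<dots> = (if i < q then f i * v $ i else 0)" by simp
  finally show "(X *\<^sub>v v) $ i = vec p (\<lambda>i. if i < q then f i * v $ i else 0) $ i" using i by simp
qed

lemma dg_mult: "dg n f * dg n g = dg n (\<lambda>j. f j * g j)"
proof (rule eq_matI)
  fix i j assume ij: "i < dim_row (dg n (\<lambda>j. f j * g j))" "j < dim_col (dg n (\<lambda>j. f j * g j))"
  hence i: "i < n" and j: "j < n" by auto
  have "(dg n f * dg n g) $$ (i,j) = (\<Sum>k\<in>{0..<n}. dg n f $$ (i,k) * dg n g $$ (k,j))"
    using i j by (simp add: scalar_prod_def)
  also have "\<dots> = (\<Sum>k\<in>{0..<n}. if k = i then (if i = j then f j * g j else 0) else 0)"
    by (rule sum.cong) (use i j in auto)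
  also have "\<dots> = dg n (\<lambda>j. f j * g j) $$ (i,j)" using i j by simp
  finally show "(dg n f * dg n g) $$ (i,j) = dg n (\<lambda>j. f j * g j) $$ (i,j)" .
qed auto

lemma dg_transpose: "transpose_mat (dg n f) = dg n f"
  by (rule eq_matI) auto

lemma dg_one: "dg n (\<lambda>_. 1) = 1\<^sub>m n"
  by (rule eq_matI) auto

lemma inv_mat_eq:
  assumes "X \<in> carrier_mat n n" "B \<in> carrier_mat n n" "X * B = 1\<^sub>m n" "B * X = 1\<^sub>m n"
  shows "inv_mat n X = B"
  unfolding inv_mat_def
proof (rule the_equality)
  show "B \<in> carrier_mat n n \<and> X * B = 1\<^sub>m n \<and> B * X = 1\<^sub>m n" using assms by auto
  fix B' assume B': "B' \<in> carrier_mat n n \<and> X * B' = 1\<^sub>m n \<and> B' * X = 1\<^sub>m n"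
  have "B' = B' * 1\<^sub>m n" using B' right_mult_one_mat by metis
  also have "\<dots> = B' * (X * B)" using assms by simp
  also have "\<dots> = (B' * X) * B" by (rule assoc_mult_mat[symmetric]) (use assms B' in auto)
  also have "\<dots> = 1\<^sub>m n * B" using B' by simp
  also have "\<dots> = B" using left_mult_one_mat[OF assms(2)] .
  finally show "B' = B" .
qed

lemma orth_cancel:
  assumes "orth_mat n V" "Y \<in> carrier_mat n k"
  shows "transpose_mat V * (V * Y) = Y"
proof -
  have V: "V \<in> carrier_mat n n" using assms unfolding orth_mat_def by auto
  have "transpose_mat V * (V * Y) = (transpose_mat V * V) * Y"
    using V assms by (simp add: assoc_mult_mat[of "transpose_mat V" n n V n Y k])
  thus ?thesis using assms unfolding orth_mat_def by simp
qed

lemma orth_cancel_vec: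
  assumes "orth_mat n V" "y \<in> carrier_vec n"
  shows "transpose_mat V *\<^sub>v (V *\<^sub>v y) = y"
proof -
  have V: "V \<in> carrier_mat n n" using assms unfolding orth_mat_def by auto
  have "transpose_mat V *\<^sub>v (V *\<^sub>v y) = (transpose_mat V * V) *\<^sub>v y"
    using V assms by (simp add: assoc_mult_mat_vec[of "transpose_mat V" n n V n y])
  thus ?thesis using assms unfolding orth_mat_def by simp
qed

lemma Q_mult:
  assumes o: "orth_mat n V"
  shows "(V * (dg n f * transpose_mat V)) * (V * (dg n g * transpose_mat V))
       = V * (dg n (\<lambda>j. f j * g j) * transpose_mat V)"
proof -
  have V: "V \<in> carrier_mat n n" using assms unfolding orth_mat_def by auto
  have Vt: "transpose_mat V \<in> carrier_mat n n" using V by simp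
  have c: "\<And>A B. A \<in> carrier_mat n n \<Longrightarrow> B \<in> carrier_mat n n \<Longrightarrow> A*B \<in> carrier_mat n n" by auto
  have "(V * (dg n f * transpose_mat V)) * (V * (dg n g * transpose_mat V))
     = V * ((dg n f * transpose_mat V) * (V * (dg n g * transpose_mat V)))"
    by (rule assoc_mult_mat) (auto intro!: c V Vt)
  also have "(dg n f * transpose_mat V) * (V * (dg n g * transpose_mat V))
     = dg n f * (transpose_mat V * (V * (dg n g * transpose_mat V)))"
    by (rule assoc_mult_mat) (auto intro!: c V Vt)
  also have "transpose_mat V * (V * (dg n g * transpose_mat V)) = dg n g * transpose_mat V"
    using V by (intro orth_cancel[OF o]) auto
  also have "dg n f * (dg n g * transpose_mat V) = (dg n f * dg n g) * transpose_mat V"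
    by (rule assoc_mult_mat[symmetric]) (auto intro!: c V Vt)
  finally show ?thesis by (simp add: dg_mult)
qed

lemma Q_one:
  assumes o: "orth_mat n V"
  shows "V * (dg n (\<lambda>_. 1) * transpose_mat V) = 1\<^sub>m n"
  using o unfolding dg_one orth_mat_def by auto


theorem theorem2:
  fixes m n :: nat
    and A U_A V_A \<Sigma>_A V_M D_M M :: "real mat"
    and \<sigma>_A \<sigma>_M :: "nat \<Rightarrow> real"
    and b :: "real vec" and \<alpha> :: real
  assumes "n \<le> m"
    and "A \<in> carrier_mat m n"
    and "orth_mat m U_A"
    and "orth_mat n V_A"
    and "\<Sigma>_A \<in> carrier_mat m n"
    and "\<And>i j. i < m \<Longrightarrow> j < n \<Longrightarrow> \<Sigma>_A $$ (i, j) = (if i = j then \<sigma>_A j else 0)"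
    and "\<And>i j. i \<le> j \<Longrightarrow> j < n \<Longrightarrow> \<sigma>_A j \<le> \<sigma>_A i"
    and "\<And>j. j < n \<Longrightarrow> \<sigma>_A j > 0"
    and "A = U_A * \<Sigma>_A * transpose_mat V_A"
    and "b \<in> carrier_vec m"
    and "\<alpha> > 0"
    and "orth_mat n V_M"
    and "\<And>j. j < n \<Longrightarrow> \<sigma>_M j \<ge> 0"
    and "D_M = mat n n (\<lambda>(i, j). if i = j then sqrt ((\<sigma>_M j)\<^sup>2 + \<alpha>\<^sup>2) else 0)"
    and "M = D_M * transpose_mat V_M"
    and "transpose_mat V_M * V_A = 1\<^sub>m n"
  shows "x_IR A M \<alpha> b k \<in> carrier_vec n \<and>
         (\<forall>i < n. x_IR A M \<alpha> b k $ i =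
            (\<Sum>j<n. phi (\<sigma>_A j) (\<sigma>_M j) \<alpha> k * ((col U_A j \<bullet> b) / \<sigma>_A j) * V_M $$ (i, j)))"
proof -
  note nm = assms(1) and Ac = assms(2) and oU = assms(3) and oVA = assms(4) and Sc = assms(5)
    and Sd = assms(6) and spos = assms(8) and Adef = assms(9) and bc = assms(10) and apos = assms(11)
    and oV = assms(12) and DM = assms(14) and Mdef = assms(15) and VV = assms(16)
  define V where "V = V_M"
  define U where "U = U_A"
  define S where "S = \<Sigma>_A"
  have Vc: "V \<in> carrier_mat n n" using oV unfolding orth_mat_def V_def by auto
  have Vtc: "transpose_mat V \<in> carrier_mat n n" using Vc by simp
  have Uc: "U \<in> carrier_mat m m" using oU unfolding orth_mat_def U_def by auto
  have Utc: "transpose_mat U \<in> carrier_mat m m" using Uc by simp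
  have Sc': "S \<in> carrier_mat m n" using Sc S_def by simp
  have Stc: "transpose_mat S \<in> carrier_mat n m" using Sc' by simp
  have oV': "orth_mat n V" using oV V_def by simp
  have oU': "orth_mat m U" using oU U_def by simp
  have VAc: "V_A \<in> carrier_mat n n" using oVA unfolding orth_mat_def by auto
  have VA: "V_A = V"
  proof -
    have "V_A = 1\<^sub>m n * V_A" using VAc by simp
    also have "\<dots> = (V * transpose_mat V) * V_A" using oV' unfolding orth_mat_def by simp
    also have "\<dots> = V * (transpose_mat V * V_A)"
      by (rule assoc_mult_mat[OF Vc Vtc VAc])
    also have "\<dots> = V" using VV Vc V_def by simp
    finally show ?thesis .
  qed
  define d2 where "d2 = (\<lambda>j. (\<sigma>_M j)\<^sup>2 + \<alpha>\<^sup>2)"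
  have d2pos: "\<And>j. d2 j > 0" unfolding d2_def using apos by (simp add: add_nonneg_pos)
  define E where "E = dg n (\<lambda>j. inverse (d2 j))"
  have Ec: "E \<in> carrier_mat n n" unfolding E_def by simp
  have DMd: "D_M = dg n (\<lambda>j. sqrt (d2 j))" unfolding DM dg_def d2_def by simp
  have MtM: "transpose_mat M * M = V * (dg n d2 * transpose_mat V)"
  proof -
    let ?D = "dg n (\<lambda>j. sqrt (d2 j))"
    have Dc: "?D \<in> carrier_mat n n" by simp
    have Mt: "transpose_mat M = V * ?D"
      unfolding Mdef DMd V_def[symmetric]
      using transpose_mult[OF Dc Vtc] by (simp add: dg_transpose)
    have "transpose_mat M * M = (V * ?D) * (?D * transpose_mat V)"
      unfolding Mt unfolding Mdef DMd V_def ..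
    also have "\<dots> = V * (?D * (?D * transpose_mat V))"
      by (rule assoc_mult_mat) (use Vc Vtc in auto)
    also have "?D * (?D * transpose_mat V) = (?D * ?D) * transpose_mat V"
      by (rule assoc_mult_mat[symmetric]) (use Vtc in auto)
    also have "?D * ?D = dg n d2" unfolding dg_mult
      using d2pos by (simp add: less_imp_le)
    finally show ?thesis .
  qed
  have P: "inv_mat n (transpose_mat M * M) = V * (E * transpose_mat V)"
  proof (rule inv_mat_eq)
    show "transpose_mat M * M \<in> carrier_mat n n" unfolding MtM using Vc Vtc by auto
    show "V * (E * transpose_mat V) \<in> carrier_mat n n" using Vc Vtc Ec by auto
    have e1: "(\<lambda>j. d2 j * inverse (d2 j)) = (\<lambda>_. 1)" using d2pos
      by (simp add: less_imp_neq[symmetric] field_simps)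
    have e2: "(\<lambda>j. inverse (d2 j) * d2 j) = (\<lambda>_. 1)" using d2pos
      by (simp add: less_imp_neq[symmetric] field_simps)
    show "transpose_mat M * M * (V * (E * transpose_mat V)) = 1\<^sub>m n"
      unfolding MtM E_def Q_mult[OF oV'] e1 Q_one[OF oV'] ..
    show "V * (E * transpose_mat V) * (transpose_mat M * M) = 1\<^sub>m n"
      unfolding MtM E_def Q_mult[OF oV'] e2 Q_one[OF oV'] ..
  qed
  have Pv: "\<And>z. z \<in> carrier_vec n \<Longrightarrow>
      inv_mat n (transpose_mat M * M) *\<^sub>v (V *\<^sub>v z) = V *\<^sub>v (E *\<^sub>v z)"
  proof -
    fix z :: "real vec" assume z: "z \<in> carrier_vec n"
    have "(V * (E * transpose_mat V)) *\<^sub>v (V *\<^sub>v z) = V *\<^sub>v ((E * transpose_mat V) *\<^sub>v (V *\<^sub>v z))"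
      by (rule assoc_mult_mat_vec) (use Vc Vtc Ec z in auto)
    also have "(E * transpose_mat V) *\<^sub>v (V *\<^sub>v z) = E *\<^sub>v (transpose_mat V *\<^sub>v (V *\<^sub>v z))"
      by (rule assoc_mult_mat_vec) (use Vc Vtc Ec z in auto)
    also have "transpose_mat V *\<^sub>v (V *\<^sub>v z) = z" by (rule orth_cancel_vec[OF oV' z])
    finally show "inv_mat n (transpose_mat M * M) *\<^sub>v (V *\<^sub>v z) = V *\<^sub>v (E *\<^sub>v z)" unfolding P .
  qed
  have A': "A = (U * S) * transpose_mat V" using Adef VA U_def S_def by simp
  have USc: "U * S \<in> carrier_mat m n" using Uc Sc' by auto
  have Av: "\<And>w. w \<in> carrier_vec n \<Longrightarrow> A *\<^sub>v (V *\<^sub>v w) = U *\<^sub>v (S *\<^sub>v w)"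
  proof -
    fix w :: "real vec" assume w: "w \<in> carrier_vec n"
    have "A *\<^sub>v (V *\<^sub>v w) = (U * S) *\<^sub>v (transpose_mat V *\<^sub>v (V *\<^sub>v w))"
      unfolding A' by (rule assoc_mult_mat_vec) (use USc Vtc Vc w in auto)
    also have "transpose_mat V *\<^sub>v (V *\<^sub>v w) = w" by (rule orth_cancel_vec[OF oV' w])
    also have "(U * S) *\<^sub>v w = U *\<^sub>v (S *\<^sub>v w)"
      by (rule assoc_mult_mat_vec) (use Uc Sc' w in auto)
    finally show "A *\<^sub>v (V *\<^sub>v w) = U *\<^sub>v (S *\<^sub>v w)" .
  qed
  have At: "transpose_mat A = V * (transpose_mat S * transpose_mat U)"
    unfolding A' using transpose_mult[OF USc Vtc] transpose_mult[OF Uc Sc'] by simp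
  have Atv: "\<And>y. y \<in> carrier_vec m \<Longrightarrow>
     transpose_mat A *\<^sub>v y = V *\<^sub>v (transpose_mat S *\<^sub>v (transpose_mat U *\<^sub>v y))"
  proof -
    fix y :: "real vec" assume y: "y \<in> carrier_vec m"
    have "transpose_mat A *\<^sub>v y = V *\<^sub>v ((transpose_mat S * transpose_mat U) *\<^sub>v y)"
      unfolding At by (rule assoc_mult_mat_vec) (use Vc Stc Utc y in auto)
    also have "(transpose_mat S * transpose_mat U) *\<^sub>v y = transpose_mat S *\<^sub>v (transpose_mat U *\<^sub>v y)"
      by (rule assoc_mult_mat_vec) (use Stc Utc y in auto)
    finally show "transpose_mat A *\<^sub>v y = V *\<^sub>v (transpose_mat S *\<^sub>v (transpose_mat U *\<^sub>v y))" .
  qed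
  have dcA: "dim_col A = n" using Ac by simp
  define c where "c = (\<lambda>j. (col U j \<bullet> b) / \<sigma>_A j)"
  define w where "w = (\<lambda>k. vec n (\<lambda>j. phi (\<sigma>_A j) (\<sigma>_M j) \<alpha> k * c j))"
  have wc: "\<And>k. w k \<in> carrier_vec n" unfolding w_def by simp
  have Sv: "\<And>v. v \<in> carrier_vec n \<Longrightarrow> S *\<^sub>v v = vec m (\<lambda>i. if i < n then \<sigma>_A i * v $ i else 0)"
    by (rule diag_mult_vec[OF Sc']) (use Sd S_def in auto)
  have Stv: "\<And>v. v \<in> carrier_vec m \<Longrightarrow> transpose_mat S *\<^sub>v v = vec n (\<lambda>i. if i < m then \<sigma>_A i * v $ i else 0)"
    by (rule diag_mult_vec[OF Stc]) (use Sd S_def Sc' in auto)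
  have Ev: "\<And>v. v \<in> carrier_vec n \<Longrightarrow> E *\<^sub>v v = vec n (\<lambda>i. if i < n then inverse (d2 i) * v $ i else 0)"
    by (rule diag_mult_vec[OF Ec]) (use E_def in auto)
  have main: "x_IR A M \<alpha> b k = V *\<^sub>v w k" for k
  proof (induction k)
    case 0
    have "w 0 = 0\<^sub>v n" unfolding w_def by (rule eq_vecI) auto
    moreover have "V *\<^sub>v 0\<^sub>v n = 0\<^sub>v n" using Vc by (intro eq_vecI) auto
    ultimately show ?case using dcA by simp
  next
    case (Suc k)
    let ?x = "V *\<^sub>v w k"
    let ?P = "inv_mat (dim_col A) (transpose_mat M * M)"
    define s where "s = S *\<^sub>v w k"
    have sc: "s \<in> carrier_vec m" unfolding s_def using Sc' wc by auto
    define g where "g = transpose_mat S *\<^sub>v (transpose_mat U *\<^sub>v b - s)"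
    have gc: "g \<in> carrier_vec n" unfolding g_def using Stc Utc bc sc by auto
    have "transpose_mat U *\<^sub>v (b - A *\<^sub>v ?x) = transpose_mat U *\<^sub>v b - transpose_mat U *\<^sub>v (U *\<^sub>v s)"
      unfolding Av[OF wc] s_def[symmetric]
      by (rule mult_minus_distrib_mat_vec) (use Utc bc Uc sc in auto)
    also have "transpose_mat U *\<^sub>v (U *\<^sub>v s) = s" by (rule orth_cancel_vec[OF oU' sc])
    finally have r1: "transpose_mat A *\<^sub>v (b - A *\<^sub>v ?x) = V *\<^sub>v g"
      unfolding g_def using Atv[of "b - A *\<^sub>v ?x"] bc Ac Vc wc[of k] by simp
    have Egc: "E *\<^sub>v g \<in> carrier_vec n" using Ec gc by auto
    have Ewc: "E *\<^sub>v w k \<in> carrier_vec n" using Ec wc by auto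
    have "x_IR A M \<alpha> b (Suc k) = ?x + ?P *\<^sub>v (transpose_mat A *\<^sub>v (b - A *\<^sub>v ?x)) - \<alpha>\<^sup>2 \<cdot>\<^sub>v (?P *\<^sub>v ?x)"
      using Suc by (simp add: Let_def)
    also have "\<dots> = V *\<^sub>v w k + V *\<^sub>v (E *\<^sub>v g) - \<alpha>\<^sup>2 \<cdot>\<^sub>v (V *\<^sub>v (E *\<^sub>v w k))"
      unfolding r1 dcA Pv[OF gc] Pv[OF wc(1)] ..
    also have "\<dots> = V *\<^sub>v (w k + E *\<^sub>v g - \<alpha>\<^sup>2 \<cdot>\<^sub>v (E *\<^sub>v w k))"
      using Vc wc[of k] Egc Ewc
      by (simp add: mult_add_distrib_mat_vec mult_minus_distrib_mat_vec mult_mat_vec)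
    also have "w k + E *\<^sub>v g - \<alpha>\<^sup>2 \<cdot>\<^sub>v (E *\<^sub>v w k) = w (Suc k)"
    proof (rule eq_vecI)
      show "dim_vec (w k + E *\<^sub>v g - \<alpha>\<^sup>2 \<cdot>\<^sub>v (E *\<^sub>v w k)) = dim_vec (w (Suc k))"
        using Ec wc[of k] by (simp add: w_def)
      fix j assume "j < dim_vec (w (Suc k))"
      hence j: "j < n" unfolding w_def by simp
      have jm: "j < m" using j nm by simp
      have gj: "g $ j = \<sigma>_A j * (col U j \<bullet> b - \<sigma>_A j * (phi (\<sigma>_A j) (\<sigma>_M j) \<alpha> k * c j))"
        unfolding g_def s_def using Stv[of "transpose_mat U *\<^sub>v b - S *\<^sub>v w k"] Sv[OF wc] j jm Utc Uc bc
        by (simp add: w_def)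
      have sj: "\<sigma>_A j \<noteq> 0" using spos[OF j] by simp
      have cb: "col U j \<bullet> b = \<sigma>_A j * c j" unfolding c_def using sj by simp
      have dj: "d2 j \<noteq> 0" using d2pos[of j] by simp
      have d2j: "(\<sigma>_M j)\<^sup>2 + \<alpha>\<^sup>2 = d2 j" by (simp add: d2_def)
      have "(w k + E *\<^sub>v g - \<alpha>\<^sup>2 \<cdot>\<^sub>v (E *\<^sub>v w k)) $ j
          = phi (\<sigma>_A j) (\<sigma>_M j) \<alpha> k * c j + inverse (d2 j) * g $ j
            - \<alpha>\<^sup>2 * (inverse (d2 j) * (phi (\<sigma>_A j) (\<sigma>_M j) \<alpha> k * c j))"
        using j Ev[OF gc] Ev[OF wc] Ec gc wc by (simp add: w_def)
      also have "\<dots> = phi (\<sigma>_A j) (\<sigma>_M j) \<alpha> (Suc k) * c j"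
        unfolding gj cb phi_rec[OF apos] d2j using dj
        by (simp add: field_simps power2_eq_square)
      finally show "(w k + E *\<^sub>v g - \<alpha>\<^sup>2 \<cdot>\<^sub>v (E *\<^sub>v w k)) $ j = w (Suc k) $ j"
        using j by (simp add: w_def)
    qed
    finally show ?case .
  qed
  show ?thesis
  proof
    show "x_IR A M \<alpha> b k \<in> carrier_vec n" unfolding main using Vc wc by auto
    show "\<forall>i<n. x_IR A M \<alpha> b k $ i =
            (\<Sum>j<n. phi (\<sigma>_A j) (\<sigma>_M j) \<alpha> k * ((col U_A j \<bullet> b) / \<sigma>_A j) * V_M $$ (i, j))"
    proof (intro allI impI)
      fix i assume i: "i < n"
      have "x_IR A M \<alpha> b k $ i = (\<Sum>j\<in>{0..<n}. V $$ (i,j) * w k $ j)"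
        unfolding main using i Vc by (simp add: scalar_prod_def w_def)
      also have "\<dots> = (\<Sum>j<n. phi (\<sigma>_A j) (\<sigma>_M j) \<alpha> k * ((col U_A j \<bullet> b) / \<sigma>_A j) * V_M $$ (i, j))"
        unfolding atLeast0LessThan by (rule sum.cong) (auto simp: w_def c_def U_def V_def)
      finally show "x_IR A M \<alpha> b k $ i =
            (\<Sum>j<n. phi (\<sigma>_A j) (\<sigma>_M j) \<alpha> k * ((col U_A j \<bullet> b) / \<sigma>_A j) * V_M $$ (i, j))" .
    qed
  qed
qed
end
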